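(* Fix positive constants $P_a$, $P_J^{\max}$, $G_{aw,f}$, $G_{aw,s}$, $L_{aw}$, $\sigma_w^2$, and fixed realizations $|\tilde h_{aw,f}|^2>0$, $|\tilde h_{aw,s}|^2>0$ of the fading power gains. Let $P_J$ be a random variable uniformly distributed on $[0,P_J^{\max}]$. Define $$T_w^{\mathbb H_0}=P_J G_{aw,s}L_{aw}|\tilde h_{aw,s}|^2+\sigma_w^2,\qquad T_w^{\mathbb H_1}=P_aG_{aw,f}L_{aw}|\tilde h_{aw,f}|^2+P_J G_{aw,s}L_{aw}|\tilde h_{aw,s}|^2+\sigma_w^2 .$$ For a threshold $\tau\in\mathbb R$, Willie decides $\mathbb H_1$ if his statistic exceeds $\tau$ and $\mathbb H_0$ otherwise; let $P_{\rm FA}(\tau)=\Pr(T_w^{\mathbb H_0}>\tau)$, $P_{\rm MD}(\tau)=\Pr(T_w^{\mathbb H_1}<\tau)$ (probabilities over $P_J$), and $P_{e,w}(\tau)=P_{\rm FA}(\tau)+P_{\rm MD}(\tau)$. Set $\lambda_1=P_J^{\max}G_{aw,s}L_{aw}|\tilde h_{aw,s}|^2+\sigma_w^2$ and $\lambda_2=P_aG_{aw,f}L_{aw}|\tilde h_{aw,f}|^2+\sigma_w^2$. Then a threshold $\tau^*$ minimizing $P_{e,w}(\tau)$ lies in $[\lambda_1,\lambda_2]$ if $\lambda_1<\lambda_2$ and in $[\lambda_2,\lambda_1]$ if $\lambda_1\ge\lambda_2$, and the minimum detection error is $$P_{e,w}^*=\begin{cases}0,&\lambda_1<\lambda_2,\\[2pt]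 1-\dfrac{P_aG_{aw,f}|\tilde h_{aw,f}|^2}{P_J^{\max}G_{aw,s}|\tilde h_{aw,s}|^2},&\lambda_1\ge\lambda_2.\end{cases}$$
   Context: Setting: a transmitter Alice has two antenna arrays; the first sends a covert signal with known power $P_a$, the second sends a jamming signal with power $P_J$, which is unknown to the warden Willie and uniform on $[0,P_J^{\max}]$, independently from block to block. $G_{aw,f}$ and $G_{aw,s}$ are the total directivity gains from Alice's first and second arrays to Willie, $L_{aw}$ is the path loss, $\tilde h_{aw,f},\tilde h_{aw,s}$ are fading coefficients (known to Willie and constant over a block), and $\sigma_w^2$ is Willie's noise variance. Willie uses the radiometer statistic $T_w=\frac1n\sum_{i=1}^n|\mathbf y_w(i)|^2$ compared to a threshold $\tau$; in the limit of infinite block length $n\to\infty$, $T_w$ equals $T_w^{\mathbb H_0}$ under hypothesis $\mathbb H_0$ (Alice not transmitting the covert signal) and $T_w^{\mathbb H_1}$ under $\mathbb H_1$ (Alice transmitting), as given in the claim. *)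

theory Defs
  imports "HOL-Probability.Probability"
begin

definition PJ_dist :: "real \<Rightarrow> real measure" where
  "PJ_dist PJmax = uniform_measure lborel {0..PJmax}"

definition Tw0 :: "real \<Rightarrow> real \<Rightarrow> real \<Rightarrow> real \<Rightarrow> real \<Rightarrow> real" where
  "Tw0 Gs L hs sw2 p = p * Gs * L * hs + sw2"

definition Tw1 :: "real \<Rightarrow> real \<Rightarrow> real \<Rightarrow> real \<Rightarrow> real \<Rightarrow> real \<Rightarrow> real \<Rightarrow> real \<Rightarrow> real" where
  "Tw1 Pa Gf hf Gs L hs sw2 p = Pa * Gf * L * hf + p * Gs * L * hs + sw2"

definition P_FA :: "real \<Rightarrow> real \<Rightarrow> real \<Rightarrow> real \<Rightarrow> real \<Rightarrow> real \<Rightarrow> real" where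
  "P_FA PJmax Gs L hs sw2 \<tau> =
     measure (PJ_dist PJmax) {p \<in> space (PJ_dist PJmax). Tw0 Gs L hs sw2 p > \<tau>}"

definition P_MD :: "real \<Rightarrow> real \<Rightarrow> real \<Rightarrow> real \<Rightarrow> real \<Rightarrow> real \<Rightarrow> real \<Rightarrow> real \<Rightarrow> real \<Rightarrow> real" where
  "P_MD PJmax Pa Gf hf Gs L hs sw2 \<tau> =
     measure (PJ_dist PJmax) {p \<in> space (PJ_dist PJmax). Tw1 Pa Gf hf Gs L hs sw2 p < \<tau>}"

definition P_ew :: "real \<Rightarrow> real \<Rightarrow> real \<Rightarrow> real \<Rightarrow> real \<Rightarrow> real \<Rightarrow> real \<Rightarrow> real \<Rightarrow> real \<Rightarrow> real" where
  "P_ew PJmax Pa Gf hf Gs L hs sw2 \<tau> =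
     P_FA PJmax Gs L hs sw2 \<tau> + P_MD PJmax Pa Gf hf Gs L hs sw2 \<tau>"

end

theory Submission
  imports Defs
begin

definition FA :: "real \<Rightarrow> real \<Rightarrow> real" where
 "FA M t = (if t < 0 then 1 else if t \<le> M then (M - t)/M else 0)"
definition MD :: "real \<Rightarrow> real \<Rightarrow> real" where
 "MD M t = (if t \<le> 0 then 0 else if t \<le> M then t/M else 1)"

lemma space_PJ[simp]: "space (PJ_dist M) = UNIV"
  by (simp add: PJ_dist_def)

lemma meas_gt:
  assumes "M > 0"
  shows "measure (PJ_dist M) {p. t < p} = FA M t"
proof -
  have "measure (PJ_dist M) {p. t < p} = measure lborel ({0..M} \<inter> {p. t < p}) / measure lborel {0..M}"
    unfolding PJ_dist_def using assms by (subst measure_uniform_measure) auto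
  also have "\<dots> = FA M t"
  proof (cases "t < 0")
    case True
    then have "{0..M} \<inter> {p. t < p} = {0..M}" by auto
    then show ?thesis using True assms by (simp add: FA_def)
  next
    case False
    show ?thesis
    proof (cases "t \<le> M")
      case True
      then have "{0..M} \<inter> {p. t < p} = {t<..M}" using False by auto
      then show ?thesis using True False assms by (simp add: FA_def)
    next
      case c2: False
      then have "{0..M} \<inter> {p. t < p} = {}" by auto
      then show ?thesis using c2 False assms by (simp add: FA_def)
    qed
  qed
  finally show ?thesis .
qed

lemma meas_lt:
  assumes "M > 0"
  shows "measure (PJ_dist M) {p. p < t} = MD M t"
proof -
  have "measure (PJ_dist M) {p. p < t} = measure lborel ({0..M} \<inter> {p. p < t}) / measure lborel {0..M}"
    unfolding PJ_dist_def using assms by (subst measure_uniform_measure) auto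
  also have "\<dots> = MD M t"
  proof (cases "t \<le> 0")
    case True
    then have "{0..M} \<inter> {p. p < t} = {}" by auto
    then show ?thesis using True assms by (simp add: MD_def)
  next
    case False
    show ?thesis
    proof (cases "t \<le> M")
      case True
      then have "{0..M} \<inter> {p. p < t} = {0..<t}" using False by auto
      then show ?thesis using True False assms by (simp add: MD_def)
    next
      case c2: False
      then have "{0..M} \<inter> {p. p < t} = {0..M}" by auto
      then show ?thesis using c2 False assms by (simp add: MD_def)
    qed
  qed
  finally show ?thesis .
qed

lemma key:
  fixes M k x :: real
  assumes "M > 0" "k > 0"
  defines "V \<equiv> (if M < k then 0 else (M - k)/M)"
  shows "FA M x + MD M (x - k) \<ge> V"
    and "FA M x + MD M (x - k) = V \<longleftrightarrow> (if M < k then x \<in> {M..k} else x \<in> {k..M})"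
  using assms by (auto simp: FA_def MD_def V_def field_simps split: if_splits)

theorem theorem1:
  fixes Pa PJmax Gf Gs L sw2 hf hs :: real
  assumes "Pa > 0" "PJmax > 0" "Gf > 0" "Gs > 0" "L > 0" "sw2 > 0" "hf > 0" "hs > 0"
  defines "Pe \<equiv> P_ew PJmax Pa Gf hf Gs L hs sw2"
      and "lam1 \<equiv> PJmax * Gs * L * hs + sw2"
      and "lam2 \<equiv> Pa * Gf * L * hf + sw2"
  shows "(\<exists>\<tau>s. (\<forall>\<tau>. Pe \<tau>s \<le> Pe \<tau>) \<and>
              (if lam1 < lam2 then \<tau>s \<in> {lam1..lam2} else \<tau>s \<in> {lam2..lam1}) \<and>
              Pe \<tau>s = (if lam1 < lam2 then 0
                       else 1 - (Pa * Gf * hf) / (PJmax * Gs * hs)))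
       \<and> (\<forall>\<tau>s. (\<forall>\<tau>. Pe \<tau>s \<le> Pe \<tau>) \<longrightarrow>
              (if lam1 < lam2 then \<tau>s \<in> {lam1..lam2} else \<tau>s \<in> {lam2..lam1}))"
  proof -
  define a where "a = Gs * L * hs"
  define c where "c = Pa * Gf * L * hf"
  define k where "k = c / a"
  have a0: "a > 0" using assms unfolding a_def by simp
  have c0: "c > 0" using assms unfolding c_def by simp
  have k0: "k > 0" using a0 c0 unfolding k_def by simp
  have s1: "{p. \<tau> < Tw0 Gs L hs sw2 p} = {p. (\<tau> - sw2)/a < p}" for \<tau>
    using a0 by (auto simp: Tw0_def a_def field_simps)
  have s2: "{p. Tw1 Pa Gf hf Gs L hs sw2 p < \<tau>} = {p. p < (\<tau> - sw2)/a - k}" for \<tau>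
    using a0 by (auto simp: Tw1_def a_def c_def k_def field_simps)
  have Pe: "Pe \<tau> = FA PJmax ((\<tau> - sw2)/a) + MD PJmax ((\<tau> - sw2)/a - k)" for \<tau>
    unfolding Pe_def P_ew_def P_FA_def P_MD_def space_PJ
    using s1 s2 meas_gt meas_lt assms(2) by simp
  define V where "V = (if PJmax < k then 0 else (PJmax - k)/PJmax)"
  have lt: "lam1 < lam2 \<longleftrightarrow> PJmax < k"
  proof -
    have "lam1 < lam2 \<longleftrightarrow> PJmax * a < c" unfolding lam1_def lam2_def a_def c_def
      by (simp add: mult.assoc)
    also have "\<dots> \<longleftrightarrow> PJmax < k" unfolding k_def using a0 by (simp add: pos_less_divide_eq)
    finally show ?thesis .
  qed
  have int: "(if lam1 < lam2 then \<tau> \<in> {lam1..lam2} else \<tau> \<in> {lam2..lam1}) \<longleftrightarrow>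
     (if PJmax < k then (\<tau> - sw2)/a \<in> {PJmax..k} else (\<tau> - sw2)/a \<in> {k..PJmax})" for \<tau>
    unfolding lt using a0 unfolding lam1_def lam2_def k_def a_def c_def
    by (auto simp: field_simps mult.assoc mult.left_commute)
  have ge: "Pe \<tau> \<ge> V" for \<tau>
    unfolding Pe V_def by (rule key(1)[OF assms(2) k0])
  have eq: "Pe \<tau> = V \<longleftrightarrow> (if lam1 < lam2 then \<tau> \<in> {lam1..lam2} else \<tau> \<in> {lam2..lam1})" for \<tau>
    unfolding Pe V_def int by (rule key(2)[OF assms(2) k0])
  have Vv: "V = (if lam1 < lam2 then 0 else 1 - (Pa * Gf * hf) / (PJmax * Gs * hs))"
    unfolding lt V_def k_def c_def a_def using assms
    by (auto simp: field_simps)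
  define t0 where "t0 = (if lam1 < lam2 then lam1 else lam2)"
  have t0: "(if lam1 < lam2 then t0 \<in> {lam1..lam2} else t0 \<in> {lam2..lam1})"
    unfolding t0_def by auto
  have pt0: "Pe t0 = V" using eq[of t0] t0 by blast
  show ?thesis
  proof (intro conjI exI allI impI)
    show "Pe t0 \<le> Pe \<tau>" for \<tau> using pt0 ge[of \<tau>] by simp
    show "(if lam1 < lam2 then t0 \<in> {lam1..lam2} else t0 \<in> {lam2..lam1})" by (rule t0)
    show "Pe t0 = (if lam1 < lam2 then 0 else 1 - (Pa * Gf * hf) / (PJmax * Gs * hs))"
      using pt0 Vv by simp
    fix \<tau>s assume "\<forall>\<tau>. Pe \<tau>s \<le> Pe \<tau>"
    then have "Pe \<tau>s \<le> Pe t0" by simp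
    then have "Pe \<tau>s = V" using ge[of \<tau>s] pt0 by simp
    then show "(if lam1 < lam2 then \<tau>s \<in> {lam1..lam2} else \<tau>s \<in> {lam2..lam1})"
      using eq[of \<tau>s] by blast
  qed
qed

end
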